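(* Let $\gamma\to_d\gamma'$ be a smooth d-step. Then: (i) for every $e\in\mathrm{Edges}$, $e$ is non-smooth in $\gamma$ iff $e$ is non-smooth in $\gamma'$; (ii) for every $e\in\mathrm{Edges}$ non-smooth in $\gamma$, $\mathrm{rank}_\gamma(e)=\mathrm{rank}_{\gamma'}(e)$; (iii) $\mathrm{sum}_d\gamma'>\mathrm{sum}_d\gamma$.
   Context: Let $G$ be a finite, connected, undirected graph with node set $V$ and a distinguished node $r$ (the root); $\mathrm{Edges}=\{(p,q)\in V\times V : p,q\text{ adjacent}\}$ (both orientations). Each node $p$ has a fixed ordered list $N(p)$ of its neighbours. A configuration $\gamma$ assigns to each node $p$ a value $\gamma.p.d\in\mathbb N$ and a neighbour $\gamma.p.par\in N(p)$. For a non-root $p$ let $Dist_p(\gamma)=\min\{\gamma.q.d+1 : q\in N(p)\}$. Algorithm BFS: Root enabled iff $\gamma.r.d\neq 0$, executing sets $r.d:=0$. Non-root $p$, action CD: enabled iff $\gamma.p.d\ne Dist_p(\gamma)$, executing sets $p.d:=Dist_p(\gamma)$. Non-root $p$, action CP: enabled iff $\gamma.p.d=Dist_p(\gamma)$ and $\gamma.q_0.d+1\neq\gamma.p.d$ with $q_0=\gamma.p.par$; executing sets $p.par$ to the first $q\in N(p)$ with $\gamma.q.d+1=\gamma.p.d$. A step $\gamma\to\gamma'$ holds iff a nonempty set $S$ of enabled nodes simultaneously execute their enabled action (evaluated in $\gamma$), others unchanged. A d-step $\gamma\to_d\gamma'$ is a step with $\gamma.r.d=\gamma'.r.d$ and $\gamma.p.d\neq\gamma'.p.d$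 for some $p$. An edge $(p,q)$ is smooth in $\gamma$ if $|\gamma.p.d-\gamma.q.d|\le 1$, non-smooth otherwise. A d-step $\gamma\to_d\gamma'$ is smooth if every node $p$ with $\gamma'.p.d\neq\gamma.p.d$ has all its edges $(p,q)$, $q\in N(p)$, smooth in $\gamma$; otherwise it is non-smooth. $\mathrm{rank}_\gamma(p,q)=\min(\gamma.p.d,\gamma.q.d)$. $\mathrm{sum}_d\gamma=\sum_{q\in V}\gamma.q.d$. *)

theory Defs
  imports Main
begin

definition Edges :: "'v set \<Rightarrow> ('v \<Rightarrow> 'v list) \<Rightarrow> ('v \<times> 'v) set" where
  "Edges V Nb = {(p, q). p \<in> V \<and> q \<in> set (Nb p)}"

definition rooted_graph :: "'v set \<Rightarrow> ('v \<Rightarrow> 'v list) \<Rightarrow> 'v \<Rightarrow> bool" where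
  "rooted_graph V Nb r \<longleftrightarrow>
     finite V \<and> r \<in> V \<and>
     (\<forall>p\<in>V. set (Nb p) \<subseteq> V \<and> distinct (Nb p) \<and> p \<notin> set (Nb p)) \<and>
     (\<forall>p\<in>V. \<forall>q\<in>V. q \<in> set (Nb p) \<longleftrightarrow> p \<in> set (Nb q)) \<and>
     (\<forall>p\<in>V. (r, p) \<in> (Edges V Nb)\<^sup>*)"

record 'v conf =
  dd :: "'v \<Rightarrow> nat"
  par :: "'v \<Rightarrow> 'v"

definition valid_conf :: "'v set \<Rightarrow> ('v \<Rightarrow> 'v list) \<Rightarrow> 'v conf \<Rightarrow> bool" where
  "valid_conf V Nb \<gamma> \<longleftrightarrow> (\<forall>p\<in>V. par \<gamma> p \<in> set (Nb p))"

definition Dist :: "('v \<Rightarrow> 'v list) \<Rightarrow> 'v conf \<Rightarrow> 'v \<Rightarrow> nat" where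
  "Dist Nb \<gamma> p = Min {dd \<gamma> q + 1 | q. q \<in> set (Nb p)}"

definition en_root :: "'v conf \<Rightarrow> 'v \<Rightarrow> bool" where
  "en_root \<gamma> r \<longleftrightarrow> dd \<gamma> r \<noteq> 0"

definition en_CD :: "('v \<Rightarrow> 'v list) \<Rightarrow> 'v conf \<Rightarrow> 'v \<Rightarrow> bool" where
  "en_CD Nb \<gamma> p \<longleftrightarrow> dd \<gamma> p \<noteq> Dist Nb \<gamma> p"

definition en_CP :: "('v \<Rightarrow> 'v list) \<Rightarrow> 'v conf \<Rightarrow> 'v \<Rightarrow> bool" where
  "en_CP Nb \<gamma> p \<longleftrightarrow> dd \<gamma> p = Dist Nb \<gamma> p \<and> dd \<gamma> (par \<gamma> p) + 1 \<noteq> dd \<gamma> p"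

definition enabled :: "('v \<Rightarrow> 'v list) \<Rightarrow> 'v \<Rightarrow> 'v conf \<Rightarrow> 'v \<Rightarrow> bool" where
  "enabled Nb r \<gamma> p \<longleftrightarrow> (if p = r then en_root \<gamma> r else en_CD Nb \<gamma> p \<or> en_CP Nb \<gamma> p)"

definition exec_d :: "('v \<Rightarrow> 'v list) \<Rightarrow> 'v \<Rightarrow> 'v conf \<Rightarrow> 'v \<Rightarrow> nat" where
  "exec_d Nb r \<gamma> p =
     (if p = r then 0 else if en_CD Nb \<gamma> p then Dist Nb \<gamma> p else dd \<gamma> p)"

definition exec_par :: "('v \<Rightarrow> 'v list) \<Rightarrow> 'v \<Rightarrow> 'v conf \<Rightarrow> 'v \<Rightarrow> 'v" where
  "exec_par Nb r \<gamma> p =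
     (if p \<noteq> r \<and> en_CP Nb \<gamma> p
      then the (find (\<lambda>q. dd \<gamma> q + 1 = dd \<gamma> p) (Nb p))
      else par \<gamma> p)"

definition step :: "'v set \<Rightarrow> ('v \<Rightarrow> 'v list) \<Rightarrow> 'v \<Rightarrow> 'v conf \<Rightarrow> 'v conf \<Rightarrow> bool" where
  "step V Nb r \<gamma> \<gamma>' \<longleftrightarrow>
     (\<exists>S. S \<subseteq> V \<and> S \<noteq> {} \<and> (\<forall>p\<in>S. enabled Nb r \<gamma> p) \<and>
        (\<forall>p. dd \<gamma>' p = (if p \<in> S then exec_d Nb r \<gamma> p else dd \<gamma> p)) \<and>
        (\<forall>p. par \<gamma>' p = (if p \<in> S then exec_par Nb r \<gamma> p else par \<gamma> p)))"

definition d_step :: "'v set \<Rightarrow> ('v \<Rightarrow> 'v list) \<Rightarrow> 'v \<Rightarrow> 'v conf \<Rightarrow> 'v conf \<Rightarrow> bool" where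
  "d_step V Nb r \<gamma> \<gamma>' \<longleftrightarrow>
     step V Nb r \<gamma> \<gamma>' \<and> dd \<gamma> r = dd \<gamma>' r \<and> (\<exists>p\<in>V. dd \<gamma> p \<noteq> dd \<gamma>' p)"

definition smooth_edge :: "'v conf \<Rightarrow> 'v \<times> 'v \<Rightarrow> bool" where
  "smooth_edge \<gamma> e \<longleftrightarrow>
     (case e of (p, q) \<Rightarrow> \<bar>int (dd \<gamma> p) - int (dd \<gamma> q)\<bar> \<le> 1)"

definition smooth_d_step :: "'v set \<Rightarrow> ('v \<Rightarrow> 'v list) \<Rightarrow> 'v \<Rightarrow> 'v conf \<Rightarrow> 'v conf \<Rightarrow> bool" where
  "smooth_d_step V Nb r \<gamma> \<gamma>' \<longleftrightarrow>
     d_step V Nb r \<gamma> \<gamma>' \<and>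
     (\<forall>p\<in>V. dd \<gamma>' p \<noteq> dd \<gamma> p \<longrightarrow> (\<forall>q\<in>set (Nb p). smooth_edge \<gamma> (p, q)))"

definition rank :: "'v conf \<Rightarrow> 'v \<times> 'v \<Rightarrow> nat" where
  "rank \<gamma> e = (case e of (p, q) \<Rightarrow> min (dd \<gamma> p) (dd \<gamma> q))"

definition sum_d :: "'v set \<Rightarrow> 'v conf \<Rightarrow> nat" where
  "sum_d V \<gamma> = (\<Sum>q\<in>V. dd \<gamma> q)"

end

theory Submission
  imports Defs
begin

theorem lemma5:
  fixes V :: "'v set" and Nb :: "'v \<Rightarrow> 'v list" and r :: 'v
    and \<gamma> \<gamma>' :: "'v conf"
  assumes "rooted_graph V Nb r"
    and "valid_conf V Nb \<gamma>"
    and "smooth_d_step V Nb r \<gamma> \<gamma>'"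
  shows "(\<forall>e\<in>Edges V Nb. \<not> smooth_edge \<gamma> e \<longleftrightarrow> \<not> smooth_edge \<gamma>' e)
       \<and> (\<forall>e\<in>Edges V Nb. \<not> smooth_edge \<gamma> e \<longrightarrow> rank \<gamma> e = rank \<gamma>' e)
       \<and> sum_d V \<gamma>' > sum_d V \<gamma>"
proof -
  have G: "finite V" "r \<in> V" "\<And>p. p \<in> V \<Longrightarrow> set (Nb p) \<subseteq> V"
    "\<And>p q. p \<in> V \<Longrightarrow> q \<in> V \<Longrightarrow> q \<in> set (Nb p) \<longleftrightarrow> p \<in> set (Nb q)"
    "\<And>p. p \<in> V \<Longrightarrow> (r, p) \<in> (Edges V Nb)\<^sup>*"
    using assms(1) unfolding rooted_graph_def by auto
  have sm: "\<And>p q. p \<in> V \<Longrightarrow> dd \<gamma>' p \<noteq> dd \<gamma> p \<Longrightarrow> q \<in> set (Nb p) \<Longrightarrow> smooth_edge \<gamma> (p, q)"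
    and ds: "d_step V Nb r \<gamma> \<gamma>'"
    using assms(3) unfolding smooth_d_step_def by auto
  from ds obtain S where S: "S \<subseteq> V" "\<forall>p. dd \<gamma>' p = (if p \<in> S then exec_d Nb r \<gamma> p else dd \<gamma> p)"
    and rr: "dd \<gamma> r = dd \<gamma>' r" and ex: "\<exists>p\<in>V. dd \<gamma> p \<noteq> dd \<gamma>' p"
    unfolding d_step_def step_def by blast
  have F1: "p \<in> V \<and> p \<noteq> r \<and> dd \<gamma>' p = Dist Nb \<gamma> p" if "dd \<gamma>' p \<noteq> dd \<gamma> p" for p
  proof -
    have "p \<in> S" using that S(2) by (metis)
    moreover have "p \<noteq> r" using that rr by auto
    ultimately show ?thesis using S that unfolding exec_d_def by (auto split: if_splits)
  qed
  have F2: "Dist Nb \<gamma> p \<le> dd \<gamma> q + 1" if "q \<in> set (Nb p)" for p q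
    unfolding Dist_def by (rule Min_le) (use that in auto)
  have F4: "Nb p \<noteq> []" if "p \<in> V" "p \<noteq> r" for p
  proof -
    from G(5)[OF that(1)] that(2) obtain y where "(y, p) \<in> Edges V Nb"
      by (metis rtranclE)
    then have "y \<in> V" "p \<in> set (Nb y)" unfolding Edges_def by auto
    then have "y \<in> set (Nb p)" using G(4)[OF that(1) \<open>y \<in> V\<close>] by auto
    then show ?thesis by auto
  qed
  have F3: "\<exists>q\<in>set (Nb p). Dist Nb \<gamma> p = dd \<gamma> q + 1" if "Nb p \<noteq> []" for p
  proof -
    have "Dist Nb \<gamma> p \<in> {dd \<gamma> q + 1 | q. q \<in> set (Nb p)}"
      unfolding Dist_def by (rule Min_in) (use that in \<open>auto simp: neq_Nil_conv\<close>)
    then show ?thesis by auto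
  qed
  have K: "dd \<gamma> p < dd \<gamma>' p \<and> (\<forall>q\<in>set (Nb p). dd \<gamma>' p \<le> dd \<gamma> q + 1)
           \<and> (\<forall>q\<in>set (Nb p). \<bar>int (dd \<gamma> p) - int (dd \<gamma> q)\<bar> \<le> 1)"
    if "dd \<gamma>' p \<noteq> dd \<gamma> p" for p
  proof -
    from F1[OF that] have pV: "p \<in> V" "p \<noteq> r" and e: "dd \<gamma>' p = Dist Nb \<gamma> p" by auto
    have sq: "\<forall>q\<in>set (Nb p). \<bar>int (dd \<gamma> p) - int (dd \<gamma> q)\<bar> \<le> 1"
      using sm[OF pV(1) that] unfolding smooth_edge_def by auto
    obtain q0 where q0: "q0 \<in> set (Nb p)" "Dist Nb \<gamma> p = dd \<gamma> q0 + 1" using F3 F4[OF pV] by blast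
    have "dd \<gamma> p \<le> dd \<gamma>' p" using sq q0 e by fastforce
    then show ?thesis using that e F2 sq by auto
  qed
  have P1: "\<not> smooth_edge \<gamma> (p, q) \<Longrightarrow> dd \<gamma>' p = dd \<gamma> p \<and> dd \<gamma>' q = dd \<gamma> q"
    if "(p, q) \<in> Edges V Nb" for p q
  proof -
    have pq: "p \<in> V" "q \<in> set (Nb p)" using that unfolding Edges_def by auto
    then have qV: "q \<in> V" and qp: "p \<in> set (Nb q)" using G(3,4) by auto
    assume ns: "\<not> smooth_edge \<gamma> (p, q)"
    show ?thesis
    proof (intro conjI; rule ccontr)
      assume "dd \<gamma>' p \<noteq> dd \<gamma> p" then show False using K pq ns unfolding smooth_edge_def by auto
    next
      assume "dd \<gamma>' q \<noteq> dd \<gamma> q" then show False using K[of q] qp ns unfolding smooth_edge_def by auto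
    qed
  qed
  have P2: "smooth_edge \<gamma> (p, q) \<Longrightarrow> smooth_edge \<gamma>' (p, q)"
    if "(p, q) \<in> Edges V Nb" for p q
  proof -
    have pq: "p \<in> V" "q \<in> set (Nb p)" using that unfolding Edges_def by auto
    then have qV: "q \<in> V" and qp: "p \<in> set (Nb q)" using G(3,4) by auto
    assume s: "smooth_edge \<gamma> (p, q)"
    show ?thesis
    proof (cases "dd \<gamma>' p = dd \<gamma> p"; cases "dd \<gamma>' q = dd \<gamma> q")
      assume "dd \<gamma>' p = dd \<gamma> p" "dd \<gamma>' q = dd \<gamma> q" then show ?thesis using s unfolding smooth_edge_def by simp
    next
      assume a: "dd \<gamma>' p = dd \<gamma> p" "dd \<gamma>' q \<noteq> dd \<gamma> q"
      then show ?thesis using K[OF a(2)] qp s unfolding smooth_edge_def by fastforce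
    next
      assume a: "dd \<gamma>' p \<noteq> dd \<gamma> p" "dd \<gamma>' q = dd \<gamma> q"
      then show ?thesis using K[OF a(1)] pq s unfolding smooth_edge_def by fastforce
    next
      assume a: "dd \<gamma>' p \<noteq> dd \<gamma> p" "dd \<gamma>' q \<noteq> dd \<gamma> q"
      then show ?thesis using K[OF a(1)] K[OF a(2)] pq qp unfolding smooth_edge_def by fastforce
    qed
  qed
  have C1: "\<forall>e\<in>Edges V Nb. \<not> smooth_edge \<gamma> e \<longleftrightarrow> \<not> smooth_edge \<gamma>' e"
  proof
    fix e assume "e \<in> Edges V Nb"
    then obtain p q where e: "e = (p, q)" "(p, q) \<in> Edges V Nb" by (cases e) auto
    show "\<not> smooth_edge \<gamma> e \<longleftrightarrow> \<not> smooth_edge \<gamma>' e"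
    proof (cases "smooth_edge \<gamma> (p, q)")
      case True then show ?thesis using P2[OF e(2)] e(1) by simp
    next
      case False
      then have "dd \<gamma>' p = dd \<gamma> p \<and> dd \<gamma>' q = dd \<gamma> q" using P1[OF e(2)] by blast
      then show ?thesis using False e(1) unfolding smooth_edge_def by simp
    qed
  qed
  have C2: "\<forall>e\<in>Edges V Nb. \<not> smooth_edge \<gamma> e \<longrightarrow> rank \<gamma> e = rank \<gamma>' e"
  proof (intro ballI impI)
    fix e assume "e \<in> Edges V Nb" "\<not> smooth_edge \<gamma> e"
    then obtain p q where e: "e = (p, q)" "(p, q) \<in> Edges V Nb" by (cases e) auto
    show "rank \<gamma> e = rank \<gamma>' e"
      using P1[OF e(2)] \<open>\<not> smooth_edge \<gamma> e\<close> unfolding e(1) rank_def by auto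
  qed
  have le: "\<forall>p\<in>V. dd \<gamma> p \<le> dd \<gamma>' p" using K by (metis order.strict_implies_order order_refl)
  from ex obtain p0 where p0: "p0 \<in> V" "dd \<gamma> p0 \<noteq> dd \<gamma>' p0" by blast
  have "sum_d V \<gamma> < sum_d V \<gamma>'"
    unfolding sum_d_def
    by (rule sum_strict_mono_ex1[OF G(1)]) (use le p0 K in \<open>auto intro!: bexI[of _ p0]\<close>)
  then show ?thesis using C1 C2 by auto
qed

end
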